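(* Let $m\ge1$ and let $q^{(1)}_k,\dots,q^{(m)}_k$, $k=1,\dots,d$, be given non-negative numbers. Over all $m$-tuples $(Q^{(1)},\dots,Q^{(m)})$ of $d\times d$ positive semidefinite matrices with prescribed diagonals $Q^{(i)}_{kk}=q^{(i)}_k$ for all $i,k$, the maximal value of the operator norm $\|Q^{(1)}+\dots+Q^{(m)}\|_\infty$ is attained when each $Q^{(i)}$ is the rank one matrix with non-negative entries $Q^{(i)}_{jk}=\sqrt{q^{(i)}_jq^{(i)}_k}$.
   Context: $\|\cdot\|_\infty$ denotes the operator (spectral) norm. *)

theory Defs
  imports "HOL-Analysis.Analysis"
begin

text \<open>Complex d x d matrices are modelled as complex^'n^'n, with d = CARD('n).\<close>

definition hermitian_mat :: "complex^'n^'n \<Rightarrow> bool" where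
  "hermitian_mat A \<longleftrightarrow> (\<forall>j k. A $ j $ k = cnj (A $ k $ j))"

definition psd_mat :: "complex^'n^'n \<Rightarrow> bool" where
  "psd_mat A \<longleftrightarrow> hermitian_mat A \<and>
     (\<forall>x::complex^'n. 0 \<le> Re (\<Sum>j\<in>UNIV. \<Sum>k\<in>UNIV. cnj (x $ j) * A $ j $ k * x $ k))"

definition op_norm :: "complex^'n^'n \<Rightarrow> real" where
  "op_norm A = onorm (\<lambda>x. A *v x)"

end

theory Submission
  imports Defs
begin

lemma sum_two:
  fixes f :: "'n::finite \<Rightarrow> 'a::comm_monoid_add"
  assumes "j \<noteq> k" "\<And>i. i \<noteq> j \<Longrightarrow> i \<noteq> k \<Longrightarrow> f i = 0"
  shows "sum f UNIV = f j + f k"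
proof -
  have "sum f UNIV = sum f {j,k}"
    by (rule sum.mono_neutral_right) (use assms in auto)
  then show ?thesis using assms by simp
qed

lemma quad_two:
  fixes A :: "complex^'n::finite^'n"
  assumes "j \<noteq> k"
  shows "(\<Sum>j'\<in>UNIV. \<Sum>k'\<in>UNIV. cnj ((\<chi> i. if i = j then u else if i = k then v else 0) $ j') * A $ j' $ k'
            * (\<chi> i. if i = j then u else if i = k then v else 0) $ k')
     = cnj u * A$j$j * u + cnj u * A$j$k * v + cnj v * A$k$j * u + cnj v * A$k$k * v"
  (is "(\<Sum>j'\<in>UNIV. \<Sum>k'\<in>UNIV. ?g j' k') = _")
proof -
  have inner: "(\<Sum>k'\<in>UNIV. ?g j' k') = ?g j' j + ?g j' k" for j'
    by (rule sum_two) (use assms in auto)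
  have "(\<Sum>j'\<in>UNIV. \<Sum>k'\<in>UNIV. ?g j' k') = (\<Sum>j'\<in>UNIV. ?g j' j + ?g j' k)"
    using inner by simp
  also have "\<dots> = (?g j j + ?g j k) + (?g k j + ?g k k)"
    by (rule sum_two) (use assms in auto)
  finally show ?thesis using assms by (simp add: algebra_simps)
qed

lemma psd_entry:
  fixes A :: "complex^'n::finite^'n"
  assumes psd: "psd_mat A" and ha: "A$j$j = complex_of_real a" and hb: "A$k$k = complex_of_real b"
    and a0: "a \<ge> 0" and b0: "b \<ge> 0"
  shows "cmod (A$j$k) \<le> sqrt (a * b)"
proof (cases "j = k")
  case True
  then have "a = b" using ha hb by simp
  then show ?thesis using True ha a0 by simp
next
  case False
  define c where "c = A$j$k"
  have "hermitian_mat A" using psd unfolding psd_mat_def by blast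
  then have hc: "A$k$j = cnj c" unfolding hermitian_mat_def c_def by blast
  have Q: "0 \<le> Re (cnj u * a * u + cnj u * c * v + cnj v * cnj c * u + cnj v * b * v)" for u v
  proof -
    have "0 \<le> Re (\<Sum>j'\<in>UNIV. \<Sum>k'\<in>UNIV. cnj ((\<chi> i. if i = j then u else if i = k then v else 0) $ j') * A $ j' $ k'
            * (\<chi> i. if i = j then u else if i = k then v else 0) $ k')"
      using psd unfolding psd_mat_def by blast
    then have "0 \<le> Re (cnj u * A$j$j * u + cnj u * A$j$k * v + cnj v * A$k$j * u + cnj v * A$k$k * v)"
      unfolding quad_two[OF False, where u=u and v=v and A=A] .
    then show ?thesis unfolding ha hb hc c_def[symmetric] .
  qed
  have sq: "(cmod c)^2 \<le> a * b"
  proof (cases "b > 0")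
    case True
    have "0 \<le> Re (cnj (complex_of_real b) * a * b + cnj (complex_of_real b) * c * (- cnj c)
       + cnj (- cnj c) * cnj c * b + cnj (- cnj c) * b * (- cnj c))" by (rule Q)
    also have "\<dots> = b * (a * b - (cmod c)^2)"
      by (simp add: algebra_simps power2_eq_square cmod_def)
    finally have "0 \<le> b * (a * b - (cmod c)^2)" .
    then show ?thesis using True by (simp add: zero_le_mult_iff)
  next
    case False
    then have b: "b = 0" using b0 by simp
    define t where "t = (cmod c)^2 / (a + 1)"
    have "0 \<le> Re (cnj (complex_of_real t) * a * t + cnj (complex_of_real t) * c * (- cnj c)
       + cnj (- cnj c) * cnj c * t + cnj (- cnj c) * b * (- cnj c))" by (rule Q)
    also have "\<dots> = t * t * a - 2 * t * (cmod c)^2"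
      using b by (simp add: algebra_simps power2_eq_square cmod_def)
    finally have h: "0 \<le> t * (t * a - 2 * (cmod c)^2)" by (simp add: algebra_simps)
    have "(cmod c)^2 \<le> 0"
    proof (rule ccontr)
      assume "\<not> (cmod c)^2 \<le> 0"
      then have p: "(cmod c)^2 > 0" by simp
      then have "t > 0" unfolding t_def using a0 by simp
      with h have "0 \<le> t * a - 2 * (cmod c)^2" by (simp add: zero_le_mult_iff)
      moreover have "t * a \<le> (cmod c)^2"
      proof -
        have "t * a = (cmod c)^2 * (a / (a + 1))" unfolding t_def by simp
        also have "\<dots> \<le> (cmod c)^2 * 1" using a0 p by (intro mult_left_mono) auto
        finally show ?thesis by simp
      qed
      ultimately show False using p by simp
    qed
    then show ?thesis using b by simp
  qed
  then show ?thesis unfolding c_def[symmetric] by (simp add: real_le_rsqrt)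
qed

lemma mat_bl: "bounded_linear (\<lambda>x. (A::complex^'n::finite^'n) *v x)"
proof -
  have "linear (\<lambda>x. A *v x)"
    by (rule linearI) (simp_all add: matrix_vector_right_distrib vec_eq_iff matrix_vector_mult_def
        scaleR_sum_right distrib_left sum.distrib)
  then show ?thesis by (simp add: linear_conv_bounded_linear)
qed

theorem mainTheorem5:
  fixes m :: nat and q :: "nat \<Rightarrow> 'n::finite \<Rightarrow> real"
  assumes "m \<ge> 1"
    and "\<And>i k. i < m \<Longrightarrow> q i k \<ge> 0"
  defines "R \<equiv> (\<lambda>i. (\<chi> j k. complex_of_real (sqrt (q i j * q i k))) :: complex^'n^'n)"
  shows "(\<forall>i<m. psd_mat (R i) \<and> (\<forall>k. R i $ k $ k = complex_of_real (q i k)))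
    \<and> (\<forall>Q :: nat \<Rightarrow> complex^'n^'n.
          (\<forall>i<m. psd_mat (Q i) \<and> (\<forall>k. Q i $ k $ k = complex_of_real (q i k)))
          \<longrightarrow> op_norm (\<Sum>i<m. Q i) \<le> op_norm (\<Sum>i<m. R i))"
proof (intro conjI allI impI)
  let ?s = "\<lambda>i k. sqrt (q i k)"
  have Rij: "R i $ j $ k = complex_of_real (?s i j) * complex_of_real (?s i k)" for i j k
    by (simp add: R_def real_sqrt_mult)
  fix i assume im: "i < m"
  show "psd_mat (R i)"
    unfolding psd_mat_def hermitian_mat_def
  proof (intro conjI allI)
    fix j k show "R i $ j $ k = cnj (R i $ k $ j)" by (simp add: Rij)
  next
    fix x :: "complex^'n"
    define w where "w = (\<Sum>k\<in>UNIV. complex_of_real (?s i k) * x $ k)"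
    have "cnj w * w = (\<Sum>j\<in>UNIV. \<Sum>k\<in>UNIV. cnj (complex_of_real (?s i j) * x $ j) * (complex_of_real (?s i k) * x $ k))"
      unfolding w_def by (simp add: sum_product cnj_sum)
    also have "\<dots> = (\<Sum>j\<in>UNIV. \<Sum>k\<in>UNIV. cnj (x $ j) * R i $ j $ k * x $ k)"
      by (simp add: Rij mult_ac)
    finally have e: "(\<Sum>j\<in>UNIV. \<Sum>k\<in>UNIV. cnj (x $ j) * R i $ j $ k * x $ k) = cnj w * w" by (rule sym)
    show "0 \<le> Re (\<Sum>j\<in>UNIV. \<Sum>k\<in>UNIV. cnj (x $ j) * R i $ j $ k * x $ k)"
      unfolding e by simp
  qed
  fix k show "R i $ k $ k = complex_of_real (q i k)"
    using assms(2)[OF im, of k] by (simp add: R_def)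
next
  fix Q :: "nat \<Rightarrow> complex^'n^'n"
  assume hQ: "\<forall>i<m. psd_mat (Q i) \<and> (\<forall>k. Q i $ k $ k = complex_of_real (q i k))"
  define S where "S = (\<Sum>i<m. Q i)"
  define T where "T = (\<Sum>i<m. R i)"
  define Tr where "Tr = (\<lambda>j k. \<Sum>i<m. sqrt (q i j * q i k))"
  have Tjk: "T $ j $ k = complex_of_real (Tr j k)" for j k
    by (simp add: T_def Tr_def sum_component R_def)
  have Tr0: "0 \<le> Tr j k" for j k unfolding Tr_def by (rule sum_nonneg) (simp add: assms(2))
  have Sjk: "cmod (S $ j $ k) \<le> Tr j k" for j k
  proof -
    have "cmod (S $ j $ k) = cmod (\<Sum>i<m. Q i $ j $ k)" by (simp add: S_def sum_component)
    also have "\<dots> \<le> (\<Sum>i<m. cmod (Q i $ j $ k))" by (rule norm_sum)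
    also have "\<dots> \<le> Tr j k" unfolding Tr_def
      by (rule sum_mono) (use hQ assms(2) in \<open>auto intro!: psd_entry\<close>)
    finally show ?thesis .
  qed
  show "op_norm (\<Sum>i<m. Q i) \<le> op_norm (\<Sum>i<m. R i)"
    unfolding op_norm_def S_def[symmetric] T_def[symmetric]
  proof (rule onorm_le)
    fix x :: "complex^'n"
    define y where "y = (\<chi> k. complex_of_real (cmod (x $ k)))"
    have ny: "norm y = norm x" by (simp add: y_def norm_vec_def)
    have "norm (S *v x) \<le> norm (T *v y)"
    proof (rule norm_le_componentwise_cart)
      fix j
      have "norm ((S *v x) $ j) = cmod (\<Sum>k\<in>UNIV. S $ j $ k * x $ k)"
        by (simp add: matrix_vector_mult_def)
      also have "\<dots> \<le> (\<Sum>k\<in>UNIV. cmod (S $ j $ k * x $ k))" by (rule norm_sum)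
      also have "\<dots> \<le> (\<Sum>k\<in>UNIV. Tr j k * cmod (x $ k))"
        by (rule sum_mono) (simp add: norm_mult Sjk mult_right_mono)
      also have "\<dots> = norm ((T *v y) $ j)"
      proof -
        have "(T *v y) $ j = complex_of_real (\<Sum>k\<in>UNIV. Tr j k * cmod (x $ k))"
          by (simp add: matrix_vector_mult_def Tjk y_def)
        moreover have "0 \<le> (\<Sum>k\<in>UNIV. Tr j k * cmod (x $ k))"
          by (simp add: sum_nonneg Tr0)
        ultimately show ?thesis by (metis norm_of_real abs_of_nonneg)
      qed
      finally show "norm ((S *v x) $ j) \<le> norm ((T *v y) $ j)" .
    qed
    also have "\<dots> \<le> onorm ((*v) T) * norm y" by (rule onorm[OF mat_bl])
    finally show "norm (S *v x) \<le> onorm ((*v) T) * norm x" using ny by simp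
  qed
qed

end
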